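(* Let $H$ be a quasitriangular Hopf algebra over $\mathbb{C}$ with quasitriangular structure $\mathcal{R}\in H\otimes H$, and $A$ a Hopf algebra non-degenerately paired with $H$, such that $H$ is factorisable, i.e. the map $\mathcal{Q}:A\to H$, $\mathcal{Q}(a)=(a\otimes{\rm id})(\mathcal{R}_{21}\mathcal{R})$, is a linear isomorphism. Then $\mathcal{Q}$ restricts to a linear isomorphism $\ker\epsilon\subset A\to\ker\epsilon\subset H$, and it intertwines the action of the quantum double $H\bowtie A^{\rm op}$ on $\ker\epsilon\subset A$ given by \[h\triangleright a=a_{(2)}\langle h,(Sa_{(1)})a_{(3)}\rangle,\qquad b\triangleright a=\langle b,\mathcal{R}'^{(1)}\mathcal{R}^{(2)}\rangle\langle a_{(1)},\mathcal{R}'^{(2)}\rangle\langle a_{(3)},\mathcal{R}^{(1)}\rangle a_{(2)}-\langle b,\mathcal{Q}(a)\rangle1\] ($h\in H$, $b\in A$) with the action on $\ker\epsilon\subset H$ given by $h\triangleright x=h_{(1)}xSh_{(2)}$, $b\triangleright x=\langle b,x_{(1)}\rangle x_{(2)}-\langle b,x\rangle1$. In particular, the quantum double subrepresentations of $\ker\epsilon\subset H$ (quantum tangent spaces) are exactly the images under $\mathcal{Q}$ of the subrepresentations of $\ker\epsilon\subset A$ under the first action.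
   Context: Hopf pairing conventions: $\langle hg,a\rangle=\langle h,a_{(1)}\rangle\langle g,a_{(2)}\rangle$, $\langle h,ab\rangle=\langle h_{(1)},a\rangle\langle h_{(2)},b\rangle$, compatible with units, counits, antipodes; Sweedler notation. Quasitriangular: $\mathcal{R}=\mathcal{R}^{(1)}\otimes\mathcal{R}^{(2)}$ invertible with $(\Delta\otimes{\rm id})\mathcal{R}=\mathcal{R}_{13}\mathcal{R}_{23}$, $({\rm id}\otimes\Delta)\mathcal{R}=\mathcal{R}_{13}\mathcal{R}_{12}$, $\Delta^{\rm op}h=\mathcal{R}(\Delta h)\mathcal{R}^{-1}$; $\mathcal{R}'$ denotes a second copy of $\mathcal{R}$; $\mathcal{R}_{21}=\mathcal{R}^{(2)}\otimes\mathcal{R}^{(1)}$. Quantum double $H\bowtie A^{\rm op}$: $H\otimes A$ with product $(h\otimes a)(g\otimes b)=hg_{(2)}\otimes ba_{(2)}\langle g_{(1)},a_{(1)}\rangle\langle g_{(3)},Sa_{(3)}\rangle$. *)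

theory Defs
  imports Complex_Main
begin

text \<open>Elements of tensor products V (x) W (resp. V (x) W (x) U)
  are represented by finite lists of pairs (resp. triples) of simple tensors;
  two representatives denote the same tensor iff every complex-valued
  bilinear (resp. trilinear) form takes the same value on them.  Coproducts are
  functions into such representatives (Sweedler notation).\<close>

definition bilinear_form ::
  "(complex \<Rightarrow> 'v::ab_group_add \<Rightarrow> 'v) \<Rightarrow> (complex \<Rightarrow> 'w::ab_group_add \<Rightarrow> 'w) \<Rightarrow> ('v \<Rightarrow> 'w \<Rightarrow> complex) \<Rightarrow> bool" where
  "bilinear_form s1 s2 f \<longleftrightarrow>
     (\<forall>y. Vector_Spaces.linear s1 (*) (\<lambda>x. f x y)) \<and>
     (\<forall>x. Vector_Spaces.linear s2 (*) (\<lambda>y. f x y))"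

definition trilinear_form ::
  "(complex \<Rightarrow> 'v::ab_group_add \<Rightarrow> 'v) \<Rightarrow> (complex \<Rightarrow> 'w::ab_group_add \<Rightarrow> 'w) \<Rightarrow> (complex \<Rightarrow> 'u::ab_group_add \<Rightarrow> 'u)
   \<Rightarrow> ('v \<Rightarrow> 'w \<Rightarrow> 'u \<Rightarrow> complex) \<Rightarrow> bool" where
  "trilinear_form s1 s2 s3 f \<longleftrightarrow>
     (\<forall>y z. Vector_Spaces.linear s1 (*) (\<lambda>x. f x y z)) \<and>
     (\<forall>x z. Vector_Spaces.linear s2 (*) (\<lambda>y. f x y z)) \<and>
     (\<forall>x y. Vector_Spaces.linear s3 (*) (\<lambda>z. f x y z))"

definition tsum2 :: "('v \<Rightarrow> 'w \<Rightarrow> complex) \<Rightarrow> ('v \<times> 'w) list \<Rightarrow> complex" where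
  "tsum2 f xs = sum_list (map (\<lambda>(p, q). f p q) xs)"

definition tsum3 :: "('v \<Rightarrow> 'w \<Rightarrow> 'u \<Rightarrow> complex) \<Rightarrow> ('v \<times> 'w \<times> 'u) list \<Rightarrow> complex" where
  "tsum3 f xs = sum_list (map (\<lambda>(p, q, r). f p q r) xs)"

definition teq2 where
  "teq2 s1 s2 xs ys \<longleftrightarrow> (\<forall>f. bilinear_form s1 s2 f \<longrightarrow> tsum2 f xs = tsum2 f ys)"

definition teq3 where
  "teq3 s1 s2 s3 xs ys \<longleftrightarrow>
     (\<forall>f. trilinear_form s1 s2 s3 f \<longrightarrow> tsum3 f xs = tsum3 f ys)"

definition tmul :: "('h::times \<times> 'h) list \<Rightarrow> ('h \<times> 'h) list \<Rightarrow> ('h \<times> 'h) list" where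
  "tmul xs ys = [(p * r, q * t). (p, q) \<leftarrow> xs, (r, t) \<leftarrow> ys]"

definition sw3 :: "('a \<Rightarrow> ('a \<times> 'a) list) \<Rightarrow> 'a \<Rightarrow> ('a \<times> 'a \<times> 'a) list" where
  "sw3 \<Delta> a = [(p, q, r). (p, x) \<leftarrow> \<Delta> a, (q, r) \<leftarrow> \<Delta> x]"

definition hopf_algebra ::
  "(complex \<Rightarrow> 'h::ring_1 \<Rightarrow> 'h) \<Rightarrow> ('h \<Rightarrow> ('h \<times> 'h) list) \<Rightarrow> ('h \<Rightarrow> complex) \<Rightarrow> ('h \<Rightarrow> 'h) \<Rightarrow> bool" where
  "hopf_algebra s \<Delta> \<epsilon> S \<longleftrightarrow>
     vector_space s \<and>
     (\<forall>c x y. s c (x * y) = s c x * y \<and> s c (x * y) = x * s c y) \<and>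
     (\<forall>f. bilinear_form s s f \<longrightarrow> Vector_Spaces.linear s (*) (\<lambda>x. tsum2 f (\<Delta> x))) \<and>
     (\<forall>x. teq3 s s s [(p, q, x2). (x1, x2) \<leftarrow> \<Delta> x, (p, q) \<leftarrow> \<Delta> x1]
                      [(x1, p, q). (x1, x2) \<leftarrow> \<Delta> x, (p, q) \<leftarrow> \<Delta> x2]) \<and>
     (\<forall>x y. teq2 s s (\<Delta> (x * y)) (tmul (\<Delta> x) (\<Delta> y))) \<and>
     teq2 s s (\<Delta> 1) [(1, 1)] \<and>
     Vector_Spaces.linear s (*) \<epsilon> \<and>
     (\<forall>x y. \<epsilon> (x * y) = \<epsilon> x * \<epsilon> y) \<and> \<epsilon> 1 = 1 \<and>
     (\<forall>x. sum_list (map (\<lambda>(p, q). s (\<epsilon> p) q) (\<Delta> x)) = x) \<and>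
     (\<forall>x. sum_list (map (\<lambda>(p, q). s (\<epsilon> q) p) (\<Delta> x)) = x) \<and>
     Vector_Spaces.linear s s S \<and>
     (\<forall>x. sum_list (map (\<lambda>(p, q). S p * q) (\<Delta> x)) = s (\<epsilon> x) 1) \<and>
     (\<forall>x. sum_list (map (\<lambda>(p, q). p * S q) (\<Delta> x)) = s (\<epsilon> x) 1)"

definition hopf_pairing ::
  "(complex \<Rightarrow> 'h::ring_1 \<Rightarrow> 'h) \<Rightarrow> ('h \<Rightarrow> ('h \<times> 'h) list) \<Rightarrow> ('h \<Rightarrow> complex) \<Rightarrow> ('h \<Rightarrow> 'h) \<Rightarrow>
   (complex \<Rightarrow> 'a::ring_1 \<Rightarrow> 'a) \<Rightarrow> ('a \<Rightarrow> ('a \<times> 'a) list) \<Rightarrow> ('a \<Rightarrow> complex) \<Rightarrow> ('a \<Rightarrow> 'a) \<Rightarrow>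
   ('h \<Rightarrow> 'a \<Rightarrow> complex) \<Rightarrow> bool" where
  "hopf_pairing sH \<Delta>H \<epsilon>H SH sA \<Delta>A \<epsilon>A SA pair \<longleftrightarrow>
     bilinear_form sH sA pair \<and>
     (\<forall>h g a. pair (h * g) a = sum_list (map (\<lambda>(p, q). pair h p * pair g q) (\<Delta>A a))) \<and>
     (\<forall>h a b. pair h (a * b) = sum_list (map (\<lambda>(p, q). pair p a * pair q b) (\<Delta>H h))) \<and>
     (\<forall>a. pair 1 a = \<epsilon>A a) \<and> (\<forall>h. pair h 1 = \<epsilon>H h) \<and>
     (\<forall>h a. pair (SH h) a = pair h (SA a))"

definition nondegenerate_pairing :: "('h::zero \<Rightarrow> 'a::zero \<Rightarrow> complex) \<Rightarrow> bool" where
  "nondegenerate_pairing pair \<longleftrightarrow>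
     (\<forall>h. (\<forall>a. pair h a = 0) \<longrightarrow> h = 0) \<and> (\<forall>a. (\<forall>h. pair h a = 0) \<longrightarrow> a = 0)"

definition quasitriangular ::
  "(complex \<Rightarrow> 'h::ring_1 \<Rightarrow> 'h) \<Rightarrow> ('h \<Rightarrow> ('h \<times> 'h) list) \<Rightarrow> ('h \<times> 'h) list \<Rightarrow> bool" where
  "quasitriangular s \<Delta> R \<longleftrightarrow>
     (\<exists>Rinv. teq2 s s (tmul R Rinv) [(1, 1)] \<and> teq2 s s (tmul Rinv R) [(1, 1)] \<and>
        (\<forall>h. teq2 s s (map (\<lambda>(p, q). (q, p)) (\<Delta> h)) (tmul (tmul R (\<Delta> h)) Rinv))) \<and>
     teq3 s s s [(p, q, r2). (r1, r2) \<leftarrow> R, (p, q) \<leftarrow> \<Delta> r1]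
                [(r1, t1, r2 * t2). (r1, r2) \<leftarrow> R, (t1, t2) \<leftarrow> R] \<and>
     teq3 s s s [(r1, p, q). (r1, r2) \<leftarrow> R, (p, q) \<leftarrow> \<Delta> r2]
                [(r1 * t1, t2, r2). (r1, r2) \<leftarrow> R, (t1, t2) \<leftarrow> R]"

text \<open>Q(a) = (a (x) id)(R21 R), where R21 R = R'(2) R(1) (x) R'(1) R(2).\<close>
definition Qmap ::
  "(complex \<Rightarrow> 'h::ring_1 \<Rightarrow> 'h) \<Rightarrow> ('h \<Rightarrow> 'a \<Rightarrow> complex) \<Rightarrow> ('h \<times> 'h) list \<Rightarrow> 'a \<Rightarrow> 'h" where
  "Qmap sH pair R a = sum_list [sH (pair (t2 * r1) a) (t1 * r2). (t1, t2) \<leftarrow> R, (r1, r2) \<leftarrow> R]"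

definition actH_A ::
  "(complex \<Rightarrow> 'a::ring_1 \<Rightarrow> 'a) \<Rightarrow> ('a \<Rightarrow> ('a \<times> 'a) list) \<Rightarrow> ('a \<Rightarrow> 'a) \<Rightarrow>
   ('h \<Rightarrow> 'a \<Rightarrow> complex) \<Rightarrow> 'h \<Rightarrow> 'a \<Rightarrow> 'a" where
  "actH_A sA \<Delta>A SA pair h a = sum_list [sA (pair h (SA a1 * a3)) a2. (a1, a2, a3) \<leftarrow> sw3 \<Delta>A a]"

definition actA_A ::
  "(complex \<Rightarrow> 'h::ring_1 \<Rightarrow> 'h) \<Rightarrow> (complex \<Rightarrow> 'a::ring_1 \<Rightarrow> 'a) \<Rightarrow> ('a \<Rightarrow> ('a \<times> 'a) list) \<Rightarrow>
   ('h \<Rightarrow> 'a \<Rightarrow> complex) \<Rightarrow> ('h \<times> 'h) list \<Rightarrow> 'a \<Rightarrow> 'a \<Rightarrow> 'a" where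
  "actA_A sH sA \<Delta>A pair R b a =
     sum_list [sA (pair (t1 * r2) b * pair t2 a1 * pair r1 a3) a2.
                 (t1, t2) \<leftarrow> R, (r1, r2) \<leftarrow> R, (a1, a2, a3) \<leftarrow> sw3 \<Delta>A a]
     - sA (pair (Qmap sH pair R a) b) 1"

definition actH_H :: "('h::ring_1 \<Rightarrow> ('h \<times> 'h) list) \<Rightarrow> ('h \<Rightarrow> 'h) \<Rightarrow> 'h \<Rightarrow> 'h \<Rightarrow> 'h" where
  "actH_H \<Delta>H SH h x = sum_list [p * x * SH q. (p, q) \<leftarrow> \<Delta>H h]"

definition actA_H ::
  "(complex \<Rightarrow> 'h::ring_1 \<Rightarrow> 'h) \<Rightarrow> ('h \<Rightarrow> ('h \<times> 'h) list) \<Rightarrow> ('h \<Rightarrow> 'a \<Rightarrow> complex) \<Rightarrow> 'a \<Rightarrow> 'h \<Rightarrow> 'h" where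
  "actA_H sH \<Delta>H pair b x = sum_list [sH (pair p b) q. (p, q) \<leftarrow> \<Delta>H x] - sH (pair x b) 1"

text \<open>Subrepresentation of the quantum double (generated by H and A) inside ker epsilon.\<close>
definition double_subrep ::
  "(complex \<Rightarrow> 'v::ab_group_add \<Rightarrow> 'v) \<Rightarrow> ('v \<Rightarrow> complex) \<Rightarrow> ('h \<Rightarrow> 'v \<Rightarrow> 'v) \<Rightarrow> ('a \<Rightarrow> 'v \<Rightarrow> 'v) \<Rightarrow> 'v set \<Rightarrow> bool" where
  "double_subrep s \<epsilon> actH actA W \<longleftrightarrow>
     W \<subseteq> {v. \<epsilon> v = 0} \<and> module.subspace s W \<and>
     (\<forall>h v. v \<in> W \<longrightarrow> actH h v \<in> W) \<and> (\<forall>b v. v \<in> W \<longrightarrow> actA b v \<in> W)"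

end

theory Submission
  imports Defs
begin


lemma vs_complex: "vector_space ((*) :: complex \<Rightarrow> complex \<Rightarrow> complex)"
  unfolding vector_space_def by (simp add: algebra_simps)

lemma sum_list_concat_map: "sum_list (map f (concat xs)) = (\<Sum>x\<leftarrow>xs. sum_list (map f x))"
  by (induct xs) auto

lemma sum_list_swap:
  "(\<Sum>x\<leftarrow>xs. \<Sum>y\<leftarrow>ys. f x y) = (\<Sum>y\<leftarrow>ys. \<Sum>x\<leftarrow>xs. (f x y :: 'c::comm_monoid_add))"
  by (induct xs) (auto simp: sum_list_addf)

lemma linear_sum_list:
  assumes "Vector_Spaces.linear s1 s2 f"
  shows "f (sum_list xs) = sum_list (map f xs)"
proof -
  have add: "\<And>x y. f (x + y) = f x + f y" and "vector_space s2" "vector_space s1"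
     and sc: "\<And>c x. f (s1 c x) = s2 c (f x)"
    using assms unfolding Vector_Spaces.linear_iff by auto
  have "f 0 = 0" using add[of 0 0] by simp
  then show ?thesis by (induct xs) (auto simp: add)
qed

lemma linear_add: "Vector_Spaces.linear s1 s2 f \<Longrightarrow> f (x + y) = f x + f y"
  unfolding Vector_Spaces.linear_iff by auto
lemma linear_scale: "Vector_Spaces.linear s1 s2 f \<Longrightarrow> f (s1 c x) = s2 c (f x)"
  unfolding Vector_Spaces.linear_iff by auto
lemma linear_zero: "Vector_Spaces.linear s1 s2 f \<Longrightarrow> f 0 = 0"
  using linear_add[of s1 s2 f 0 0] by simp
lemma linear_diff: "Vector_Spaces.linear s1 s2 f \<Longrightarrow> f (x - y) = f x - f y"
  using linear_add[of s1 s2 f "x - y" y] by simp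

locale alg =
  fixes s :: "complex \<Rightarrow> 'a::ring_1 \<Rightarrow> 'a"
  assumes vs: "vector_space s"
    and sl: "\<And>c x y. s c (x * y) = s c x * y"
    and sr: "\<And>c x y. s c (x * y) = x * s c y"
begin

abbreviation lin :: "('a \<Rightarrow> complex) \<Rightarrow> bool" where "lin f \<equiv> Vector_Spaces.linear s (*) f"
abbreviation vlin :: "('a \<Rightarrow> 'a) \<Rightarrow> bool" where "vlin f \<equiv> Vector_Spaces.linear s s f"

lemma linI: "(\<And>x y. f (x + y) = f x + f y) \<Longrightarrow> (\<And>c x. f (s c x) = c * f x) \<Longrightarrow> lin f"
  unfolding Vector_Spaces.linear_iff using vs vs_complex by auto
lemma vlinI: "(\<And>x y. f (x + y) = f x + f y) \<Longrightarrow> (\<And>c x. f (s c x) = s c (f x)) \<Longrightarrow> vlin f"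
  unfolding Vector_Spaces.linear_iff using vs by auto

lemma lin_sum: assumes "\<And>i. lin (f i)" shows "lin (\<lambda>x. sum_list (map (\<lambda>i. f i x) L))"
  by (rule linI) (simp_all add: linear_add[OF assms] linear_scale[OF assms] sum_list_addf sum_list_const_mult)
lemma lin_case: "(\<And>p q. lin (\<lambda>x. f p q x)) \<Longrightarrow> lin (\<lambda>x. case_prod (\<lambda>p q. f p q x) i)"
  by (cases i) auto
lemma lin_cmult: "lin f \<Longrightarrow> lin (\<lambda>x. c * f x)"
  by (rule linI) (auto simp: linear_add linear_scale algebra_simps)
lemma lin_multc: "lin f \<Longrightarrow> lin (\<lambda>x. f x * c)"
  by (rule linI) (auto simp: linear_add linear_scale algebra_simps)
lemma lin_add: "lin f \<Longrightarrow> lin g \<Longrightarrow> lin (\<lambda>x. f x + g x)"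
  by (rule linI) (auto simp: linear_add linear_scale algebra_simps)
lemma lin_comp: "lin f \<Longrightarrow> vlin g \<Longrightarrow> lin (\<lambda>x. f (g x))"
  by (rule linI) (auto simp: linear_add linear_scale)

lemma vlin_id: "vlin (\<lambda>x. x)"
  by (rule vlinI) auto
lemma vlin_multL: "vlin g \<Longrightarrow> vlin (\<lambda>x. y * g x)"
  by (rule vlinI) (auto simp: linear_add linear_scale distrib_left sr)
lemma vlin_multR: "vlin g \<Longrightarrow> vlin (\<lambda>x. g x * y)"
  by (rule vlinI) (auto simp: linear_add linear_scale distrib_right sl)
lemma vlin_comp: "vlin f \<Longrightarrow> vlin g \<Longrightarrow> vlin (\<lambda>x. f (g x))"
  by (rule vlinI) (auto simp: linear_add linear_scale)

lemma lin_Delta: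
  assumes "\<forall>f. bilinear_form s s f \<longrightarrow> Vector_Spaces.linear s (*) (\<lambda>x. tsum2 f (\<Delta> x))"
   and "\<And>q. lin (\<lambda>p. f p q)" "\<And>p. lin (\<lambda>q. f p q)"
  shows "lin (\<lambda>x. sum_list (map (\<lambda>(p,q). f p q) (\<Delta> x)))"
  using assms unfolding bilinear_form_def tsum2_def by auto

end


lemma tmul_Nil[simp]: "tmul [] Y = []" unfolding tmul_def by simp
lemma tmul_Cons[simp]: "tmul (x # X) Y = map (\<lambda>(r,t). (fst x * r, snd x * t)) Y @ tmul X Y"
  unfolding tmul_def by (cases x) (simp add: split_def)
lemma tmul_append[simp]: "tmul (X @ X') Y = tmul X Y @ tmul X' Y"
  by (induct X) auto
lemma tmul_map_left: "tmul (map (\<lambda>(r,t). (a * r, b * t)) Y) Z = map (\<lambda>(r,t). (a * r, b * t)) (tmul Y (Z::('b::semigroup_mult \<times> 'b) list))"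
  by (induct Y) (auto simp: split_def mult.assoc)
lemma tmul_assoc: "tmul (tmul X Y) Z = tmul X (tmul Y (Z::('b::semigroup_mult \<times> 'b) list))"
  by (induct X) (auto simp: tmul_map_left)
lemma tmul_one_right[simp]: "tmul X [(1,1)] = (X::('b::monoid_mult \<times> 'b) list)"
  by (induct X) auto
lemma tmul_one_left[simp]: "tmul [(1,1)] X = (X::('b::monoid_mult \<times> 'b) list)"
  by (induct X) auto
definition flip :: "('b \<times> 'b) list \<Rightarrow> ('b \<times> 'b) list" where "flip X = map (\<lambda>(p,q). (q,p)) X"
lemma flip_tmul: "flip (tmul X Y) = tmul (flip X) (flip Y)"
  unfolding flip_def by (induct X) (auto simp: split_def)
lemma tsum2_tmul: "tsum2 f (tmul X Y) = (\<Sum>(p,q)\<leftarrow>X. \<Sum>(r,t)\<leftarrow>Y. f (p*r) (q*t))"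
  unfolding tsum2_def by (induct X) (auto simp: split_def o_def)
lemma tsum2_flip: "tsum2 f (flip X) = tsum2 (\<lambda>p q. f q p) X"
  unfolding tsum2_def flip_def by (simp add: split_def o_def)

context alg begin

lemma teq2_refl: "teq2 s s X X" unfolding teq2_def by simp
lemma teq2_sym: "teq2 s s X Y \<Longrightarrow> teq2 s s Y X" unfolding teq2_def by simp
lemma teq2_trans: "teq2 s s X Y \<Longrightarrow> teq2 s s Y Z \<Longrightarrow> teq2 s s X Z" unfolding teq2_def by simp

lemma bil_lin1: "bilinear_form s s f \<Longrightarrow> lin (\<lambda>x. f x y)" unfolding bilinear_form_def by auto
lemma bil_lin2: "bilinear_form s s f \<Longrightarrow> lin (\<lambda>y. f x y)" unfolding bilinear_form_def by auto

lemma teq2_tmul_right: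
  assumes "teq2 s s X X'" shows "teq2 s s (tmul X Y) (tmul X' Y)"
  unfolding teq2_def
proof (intro allI impI)
  fix f assume f: "bilinear_form s s f"
  let ?g = "\<lambda>p q. \<Sum>(r,t)\<leftarrow>Y. f (p*r) (q*t)"
  have "bilinear_form s s ?g"
    unfolding bilinear_form_def
  proof (intro allI conjI)
    fix q show "lin (\<lambda>p. ?g p q)"
      by (intro lin_sum lin_case lin_comp[OF bil_lin1[OF f]] vlin_multR vlin_id)
  next
    fix p show "lin (\<lambda>q. ?g p q)"
      by (intro lin_sum lin_case lin_comp[OF bil_lin2[OF f]] vlin_multR vlin_id)
  qed
  then have "tsum2 ?g X = tsum2 ?g X'" using assms unfolding teq2_def by blast
  then show "tsum2 f (tmul X Y) = tsum2 f (tmul X' Y)" unfolding tsum2_tmul by (simp add: tsum2_def)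
qed

lemma teq2_tmul_left:
  assumes "teq2 s s X X'" shows "teq2 s s (tmul Y X) (tmul Y X')"
  unfolding teq2_def
proof (intro allI impI)
  fix f assume f: "bilinear_form s s f"
  let ?g = "\<lambda>r t. \<Sum>(p,q)\<leftarrow>Y. f (p*r) (q*t)"
  have "bilinear_form s s ?g"
    unfolding bilinear_form_def
  proof (intro allI conjI)
    fix q show "lin (\<lambda>p. ?g p q)"
      by (intro lin_sum lin_case lin_comp[OF bil_lin1[OF f]] vlin_multL vlin_id)
  next
    fix p show "lin (\<lambda>q. ?g p q)"
      by (intro lin_sum lin_case lin_comp[OF bil_lin2[OF f]] vlin_multL vlin_id)
  qed
  then have "tsum2 ?g X = tsum2 ?g X'" using assms unfolding teq2_def by blast
  moreover have "tsum2 f (tmul Y X) = tsum2 ?g X" "tsum2 f (tmul Y X') = tsum2 ?g X'"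
    unfolding tsum2_tmul unfolding tsum2_def split_def by (simp_all add: sum_list_swap[where xs=Y])
  ultimately show "tsum2 f (tmul Y X) = tsum2 f (tmul Y X')" by simp
qed

lemma teq2_flip:
  assumes "teq2 s s X X'" shows "teq2 s s (flip X) (flip X')"
  unfolding teq2_def
proof (intro allI impI)
  fix f assume f: "bilinear_form s s f"
  then have "bilinear_form s s (\<lambda>p q. f q p)" unfolding bilinear_form_def by auto
  then show "tsum2 f (flip X) = tsum2 f (flip X')" using assms unfolding teq2_def tsum2_flip by blast
qed

end


lemma sum2_swap: "(\<Sum>(a,b)\<leftarrow>xs. \<Sum>(c,d)\<leftarrow>ys. f a b c d) = (\<Sum>(c,d)\<leftarrow>ys. \<Sum>(a,b)\<leftarrow>xs. (f a b c d :: 'c::comm_monoid_add))"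
  unfolding split_def by (rule sum_list_swap)
lemma sum2_cmult[simp]: "(\<Sum>(a,b)\<leftarrow>xs. c * f a b) = (c::'c::semiring_0) * (\<Sum>(a,b)\<leftarrow>xs. f a b)"
  by (induct xs) (auto simp: distrib_left)
lemma sum2_multc[simp]: "(\<Sum>(a,b)\<leftarrow>xs. f a b * c) = (\<Sum>(a,b)\<leftarrow>xs. f a b) * (c::'c::semiring_0)"
  by (induct xs) (auto simp: distrib_right)
lemma sum3_cmult[simp]: "(\<Sum>(a,b,d)\<leftarrow>xs. c * f a b d) = (c::'c::semiring_0) * (\<Sum>(a,b,d)\<leftarrow>xs. f a b d)"
  by (induct xs) (auto simp: distrib_left)
lemma sum3_multc[simp]: "(\<Sum>(a,b,d)\<leftarrow>xs. f a b d * c) = (\<Sum>(a,b,d)\<leftarrow>xs. f a b d) * (c::'c::semiring_0)"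
  by (induct xs) (auto simp: distrib_right)

lemma sum32_swap: "(\<Sum>(a,b,c)\<leftarrow>xs. \<Sum>(d,e)\<leftarrow>ys. f a b c d e) = (\<Sum>(d,e)\<leftarrow>ys. \<Sum>(a,b,c)\<leftarrow>xs. (f a b c d e :: 'c::comm_monoid_add))"
  unfolding split_def by (rule sum_list_swap)


locale qt =
  fixes sH :: "complex \<Rightarrow> 'h::ring_1 \<Rightarrow> 'h" and \<Delta>H :: "'h \<Rightarrow> ('h \<times> 'h) list"
    and \<epsilon>H :: "'h \<Rightarrow> complex" and SH :: "'h \<Rightarrow> 'h"
    and sA :: "complex \<Rightarrow> 'a::ring_1 \<Rightarrow> 'a" and \<Delta>A :: "'a \<Rightarrow> ('a \<times> 'a) list"
    and \<epsilon>A :: "'a \<Rightarrow> complex" and SA :: "'a \<Rightarrow> 'a"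
    and P :: "'h \<Rightarrow> 'a \<Rightarrow> complex" and R :: "('h \<times> 'h) list"
  assumes hH: "hopf_algebra sH \<Delta>H \<epsilon>H SH"
    and hA: "hopf_algebra sA \<Delta>A \<epsilon>A SA"
    and hp: "hopf_pairing sH \<Delta>H \<epsilon>H SH sA \<Delta>A \<epsilon>A SA P"
    and nd: "nondegenerate_pairing P"
    and qtr: "quasitriangular sH \<Delta>H R"

sublocale qt \<subseteq> H: alg sH
  using hH unfolding hopf_algebra_def by (intro alg.intro) blast+
sublocale qt \<subseteq> A: alg sA
  using hA unfolding hopf_algebra_def by (intro alg.intro) blast+

context qt begin

lemma H_D_lin: "bilinear_form sH sH f \<Longrightarrow> H.lin (\<lambda>x. tsum2 f (\<Delta>H x))"
  using hH unfolding hopf_algebra_def by auto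
lemma H_coassoc: "teq3 sH sH sH [(p, q, x2). (x1, x2) \<leftarrow> \<Delta>H x, (p, q) \<leftarrow> \<Delta>H x1]
                      [(x1, p, q). (x1, x2) \<leftarrow> \<Delta>H x, (p, q) \<leftarrow> \<Delta>H x2]"
  using hH unfolding hopf_algebra_def by auto
lemma H_Dmul: "teq2 sH sH (\<Delta>H (x * y)) (tmul (\<Delta>H x) (\<Delta>H y))"
  using hH unfolding hopf_algebra_def by auto
lemma H_eps_lin: "H.lin \<epsilon>H"
  using hH unfolding hopf_algebra_def by auto
lemma H_eps_mult: "\<epsilon>H (x * y) = \<epsilon>H x * \<epsilon>H y" and H_eps_1: "\<epsilon>H 1 = 1"
  using hH unfolding hopf_algebra_def by auto
lemma H_counitL: "(\<Sum>(p,q)\<leftarrow>\<Delta>H x. sH (\<epsilon>H p) q) = x"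
  and H_counitR: "(\<Sum>(p,q)\<leftarrow>\<Delta>H x. sH (\<epsilon>H q) p) = x"
  using hH unfolding hopf_algebra_def by auto
lemma H_S_lin: "H.vlin SH"
  using hH unfolding hopf_algebra_def by auto
lemma H_antiL: "(\<Sum>(p,q)\<leftarrow>\<Delta>H x. SH p * q) = sH (\<epsilon>H x) 1"
  and H_antiR: "(\<Sum>(p,q)\<leftarrow>\<Delta>H x. p * SH q) = sH (\<epsilon>H x) 1"
  using hH unfolding hopf_algebra_def by auto

lemma A_D_lin: "bilinear_form sA sA f \<Longrightarrow> A.lin (\<lambda>x. tsum2 f (\<Delta>A x))"
  using hA unfolding hopf_algebra_def by auto
lemma A_eps_lin: "A.lin \<epsilon>A"
  using hA unfolding hopf_algebra_def by auto
lemma A_counitL: "(\<Sum>(p,q)\<leftarrow>\<Delta>A x. sA (\<epsilon>A p) q) = x"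
  and A_counitR: "(\<Sum>(p,q)\<leftarrow>\<Delta>A x. sA (\<epsilon>A q) p) = x"
  using hA unfolding hopf_algebra_def by auto
lemma A_S_lin: "A.vlin SA"
  using hA unfolding hopf_algebra_def by auto

lemma P_bil: "bilinear_form sH sA P" using hp unfolding hopf_pairing_def by auto
lemma P_lin1: "H.lin (\<lambda>x. P x a)" using P_bil unfolding bilinear_form_def by auto
lemma P_lin2: "A.lin (\<lambda>y. P h y)" using P_bil unfolding bilinear_form_def by auto
lemma P_mulH: "P (h * g) a = (\<Sum>(p,q)\<leftarrow>\<Delta>A a. P h p * P g q)"
  using hp unfolding hopf_pairing_def by auto
lemma P_mulA: "P h (a * b) = (\<Sum>(p,q)\<leftarrow>\<Delta>H h. P p a * P q b)"
  using hp unfolding hopf_pairing_def by auto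
lemma P_1a: "P 1 a = \<epsilon>A a" and P_h1: "P h 1 = \<epsilon>H h" and P_S: "P (SH h) a = P h (SA a)"
  using hp unfolding hopf_pairing_def by auto

lemma lin_P1: "H.vlin g \<Longrightarrow> H.lin (\<lambda>x. P (g x) a)"
  by (rule H.lin_comp[OF P_lin1])
lemma lin_P2: "A.vlin g \<Longrightarrow> A.lin (\<lambda>x. P h (g x))"
  by (rule A.lin_comp[OF P_lin2])
lemma lin_epsH: "H.vlin g \<Longrightarrow> H.lin (\<lambda>x. \<epsilon>H (g x))"
  by (rule H.lin_comp[OF H_eps_lin])
lemma lin_epsA: "A.vlin g \<Longrightarrow> A.lin (\<lambda>x. \<epsilon>A (g x))"
  by (rule A.lin_comp[OF A_eps_lin])
lemma vlin_SH: "H.vlin g \<Longrightarrow> H.vlin (\<lambda>x. SH (g x))"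
  by (rule H.vlin_comp[OF H_S_lin])
lemma vlin_SA: "A.vlin g \<Longrightarrow> A.vlin (\<lambda>x. SA (g x))"
  by (rule A.vlin_comp[OF A_S_lin])
lemma lin_DH: "(\<And>q. H.lin (\<lambda>p. f p q)) \<Longrightarrow> (\<And>p. H.lin (\<lambda>q. f p q)) \<Longrightarrow> H.lin (\<lambda>x. \<Sum>(p,q)\<leftarrow>\<Delta>H x. f p q)"
  by (rule H.lin_Delta) (use hH in \<open>auto simp: hopf_algebra_def\<close>)
lemma lin_DA: "(\<And>q. A.lin (\<lambda>p. f p q)) \<Longrightarrow> (\<And>p. A.lin (\<lambda>q. f p q)) \<Longrightarrow> A.lin (\<lambda>x. \<Sum>(p,q)\<leftarrow>\<Delta>A x. f p q)"
  by (rule A.lin_Delta) (use hA in \<open>auto simp: hopf_algebra_def\<close>)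

lemmas linrules = H.lin_sum H.lin_case H.lin_cmult H.lin_multc H.lin_add lin_P1 lin_epsH lin_DH
   H.vlin_id H.vlin_multL H.vlin_multR vlin_SH
   A.lin_sum A.lin_case A.lin_cmult A.lin_multc A.lin_add lin_P2 lin_epsA lin_DA
   A.vlin_id A.vlin_multL A.vlin_multR vlin_SA

lemma "H.lin (\<lambda>x. \<Sum>(t1,t2)\<leftarrow>R. \<Sum>(r1,r2)\<leftarrow>\<Delta>H x. P (SH t1 * r2) a * P (t2 * r1 * SH q) b)"
  by (intro linrules)

lemma extH: "(\<And>c. P x c = P y c) \<Longrightarrow> x = y"
proof -
  assume "\<And>c. P x c = P y c"
  then have "\<forall>c. P (x - y) c = 0" by (simp add: linear_diff[OF P_lin1])
  then show "x = y" using nd unfolding nondegenerate_pairing_def by auto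
qed
lemma extA: "(\<And>h. P h x = P h y) \<Longrightarrow> x = y"
proof -
  assume "\<And>h. P h x = P h y"
  then have "\<forall>h. P h (x - y) = 0" by (simp add: linear_diff[OF P_lin2])
  then show "x = y" using nd unfolding nondegenerate_pairing_def by auto
qed

lemma H_counitL_lin: "H.lin g \<Longrightarrow> (\<Sum>(p,q)\<leftarrow>\<Delta>H x. \<epsilon>H p * g q) = g x"
proof -
  assume g: "H.lin g"
  have "g x = g (\<Sum>(p,q)\<leftarrow>\<Delta>H x. sH (\<epsilon>H p) q)" by (simp add: H_counitL)
  also have "\<dots> = (\<Sum>(p,q)\<leftarrow>\<Delta>H x. \<epsilon>H p * g q)"
    by (simp add: linear_sum_list[OF g] o_def split_def linear_scale[OF g])
  finally show ?thesis by simp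
qed
lemma H_counitR_lin: "H.lin g \<Longrightarrow> (\<Sum>(p,q)\<leftarrow>\<Delta>H x. \<epsilon>H q * g p) = g x"
proof -
  assume g: "H.lin g"
  have "g x = g (\<Sum>(p,q)\<leftarrow>\<Delta>H x. sH (\<epsilon>H q) p)" by (simp add: H_counitR)
  also have "\<dots> = (\<Sum>(p,q)\<leftarrow>\<Delta>H x. \<epsilon>H q * g p)"
    by (simp add: linear_sum_list[OF g] o_def split_def linear_scale[OF g])
  finally show ?thesis by simp
qed
lemma A_counitL_lin: "A.lin g \<Longrightarrow> (\<Sum>(p,q)\<leftarrow>\<Delta>A x. \<epsilon>A p * g q) = g x"
proof -
  assume g: "A.lin g"
  have "g x = g (\<Sum>(p,q)\<leftarrow>\<Delta>A x. sA (\<epsilon>A p) q)" by (simp add: A_counitL)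
  also have "\<dots> = (\<Sum>(p,q)\<leftarrow>\<Delta>A x. \<epsilon>A p * g q)"
    by (simp add: linear_sum_list[OF g] o_def split_def linear_scale[OF g])
  finally show ?thesis by simp
qed
lemma H_antiL_lin: "H.lin g \<Longrightarrow> (\<Sum>(p,q)\<leftarrow>\<Delta>H x. g (SH p * q)) = \<epsilon>H x * g 1"
proof -
  assume g: "H.lin g"
  have "\<epsilon>H x * g 1 = g (\<Sum>(p,q)\<leftarrow>\<Delta>H x. SH p * q)" by (simp add: H_antiL linear_scale[OF g])
  also have "\<dots> = (\<Sum>(p,q)\<leftarrow>\<Delta>H x. g (SH p * q))"
    by (simp add: linear_sum_list[OF g] o_def split_def)
  finally show ?thesis by simp
qed
lemma H_antiR_lin: "H.lin g \<Longrightarrow> (\<Sum>(p,q)\<leftarrow>\<Delta>H x. g (p * SH q)) = \<epsilon>H x * g 1"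
proof -
  assume g: "H.lin g"
  have "\<epsilon>H x * g 1 = g (\<Sum>(p,q)\<leftarrow>\<Delta>H x. p * SH q)" by (simp add: H_antiR linear_scale[OF g])
  also have "\<dots> = (\<Sum>(p,q)\<leftarrow>\<Delta>H x. g (p * SH q))"
    by (simp add: linear_sum_list[OF g] o_def split_def)
  finally show ?thesis by simp
qed


lemma teq3_apply:
  assumes "teq3 sH sH sH X Y"
    and "\<And>y z. H.lin (\<lambda>x. F x y z)" "\<And>x z. H.lin (\<lambda>y. F x y z)" "\<And>x y. H.lin (\<lambda>z. F x y z)"
  shows "(\<Sum>(p,q,r)\<leftarrow>X. F p q r) = (\<Sum>(p,q,r)\<leftarrow>Y. F p q r)"
  using assms unfolding teq3_def tsum3_def trilinear_form_def by blast

lemma coassocH: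
  assumes "\<And>y z. H.lin (\<lambda>x. F x y z)" "\<And>x z. H.lin (\<lambda>y. F x y z)" "\<And>x y. H.lin (\<lambda>z. F x y z)"
  shows "(\<Sum>(x1,x2)\<leftarrow>\<Delta>H x. \<Sum>(p,q)\<leftarrow>\<Delta>H x1. F p q x2) = (\<Sum>(x1,x2)\<leftarrow>\<Delta>H x. \<Sum>(p,q)\<leftarrow>\<Delta>H x2. F x1 p q)"
  using teq3_apply[OF H_coassoc assms] by (simp add: sum_list_concat_map o_def split_def)

lemma QT1:
  assumes "\<And>y z. H.lin (\<lambda>x. F x y z)" "\<And>x z. H.lin (\<lambda>y. F x y z)" "\<And>x y. H.lin (\<lambda>z. F x y z)"
  shows "(\<Sum>(r1,r2)\<leftarrow>R. \<Sum>(p,q)\<leftarrow>\<Delta>H r1. F p q r2) = (\<Sum>(r1,r2)\<leftarrow>R. \<Sum>(t1,t2)\<leftarrow>R. F r1 t1 (r2 * t2))"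
  using teq3_apply[OF _ assms, of "[(p, q, r2). (r1, r2) \<leftarrow> R, (p, q) \<leftarrow> \<Delta>H r1]" "[(r1, t1, r2 * t2). (r1, r2) \<leftarrow> R, (t1, t2) \<leftarrow> R]"]
    qtr unfolding quasitriangular_def by (simp add: sum_list_concat_map o_def split_def)

lemma QT2:
  assumes "\<And>y z. H.lin (\<lambda>x. F x y z)" "\<And>x z. H.lin (\<lambda>y. F x y z)" "\<And>x y. H.lin (\<lambda>z. F x y z)"
  shows "(\<Sum>(r1,r2)\<leftarrow>R. \<Sum>(p,q)\<leftarrow>\<Delta>H r2. F r1 p q) = (\<Sum>(r1,r2)\<leftarrow>R. \<Sum>(t1,t2)\<leftarrow>R. F (r1 * t1) t2 r2)"
  using teq3_apply[OF _ assms, of "[(r1, p, q). (r1, r2) \<leftarrow> R, (p, q) \<leftarrow> \<Delta>H r2]" "[(r1 * t1, t2, r2). (r1, r2) \<leftarrow> R, (t1, t2) \<leftarrow> R]"]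
    qtr unfolding quasitriangular_def by (simp add: sum_list_concat_map o_def split_def)

lemma DmulH:
  assumes "\<And>y. H.lin (\<lambda>x. F x y)" "\<And>x. H.lin (\<lambda>y. F x y)"
  shows "(\<Sum>(p,q)\<leftarrow>\<Delta>H (x * y). F p q) = (\<Sum>(p,q)\<leftarrow>\<Delta>H x. \<Sum>(r,t)\<leftarrow>\<Delta>H y. F (p*r) (q*t))"
proof -
  have "bilinear_form sH sH F" using assms unfolding bilinear_form_def by blast
  then have "tsum2 F (\<Delta>H (x * y)) = tsum2 F (tmul (\<Delta>H x) (\<Delta>H y))"
    using H_Dmul unfolding teq2_def by blast
  then show ?thesis unfolding tsum2_tmul by (simp add: tsum2_def)
qed


lemma lin_sumH: "H.lin g \<Longrightarrow> g (\<Sum>(p,q)\<leftarrow>L. sH (f p q) (h p q)) = (\<Sum>(p,q)\<leftarrow>L. f p q * g (h p q))"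
  by (simp add: linear_sum_list o_def split_def linear_scale)
lemma lin_sumA: "A.lin g \<Longrightarrow> g (\<Sum>(p,q)\<leftarrow>L. sA (f p q) (h p q)) = (\<Sum>(p,q)\<leftarrow>L. f p q * g (h p q))"
  by (simp add: linear_sum_list o_def split_def linear_scale)

lemma Rinv_ex: "\<exists>Rinv. teq2 sH sH (tmul R Rinv) [(1, 1)] \<and> teq2 sH sH (tmul Rinv R) [(1, 1)] \<and>
        (\<forall>h. teq2 sH sH (flip (\<Delta>H h)) (tmul (tmul R (\<Delta>H h)) Rinv))"
  using qtr unfolding quasitriangular_def flip_def by blast

definition "psi = (\<Sum>(r1,r2)\<leftarrow>R. sH (\<epsilon>H r1) r2)"
definition "phi = (\<Sum>(r1,r2)\<leftarrow>R. sH (\<epsilon>H r2) r1)"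

lemma R_psi: "teq2 sH sH R (map (\<lambda>(r,t). (1 * r, psi * t)) R)"
  unfolding teq2_def
proof (intro allI impI)
  fix G assume G: "bilinear_form sH sH G"
  note Gl = H.bil_lin1[OF G] H.bil_lin2[OF G]
  have "(\<Sum>(r1,r2)\<leftarrow>R. \<Sum>(p,q)\<leftarrow>\<Delta>H r1. \<epsilon>H p * G q r2) = (\<Sum>(r1,r2)\<leftarrow>R. \<Sum>(t1,t2)\<leftarrow>R. \<epsilon>H r1 * G t1 (r2 * t2))"
    by (rule QT1) (intro linrules Gl H.lin_comp[OF Gl(1)] H.lin_comp[OF Gl(2)])+
  also have "\<dots> = (\<Sum>(t1,t2)\<leftarrow>R. \<Sum>(r1,r2)\<leftarrow>R. \<epsilon>H r1 * G t1 (r2 * t2))"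
    unfolding split_def by (rule sum_list_swap)
  also have "\<dots> = (\<Sum>(t1,t2)\<leftarrow>R. G t1 (psi * t2))"
  proof -
    have "G t1 (psi * t2) = (\<Sum>(r1,r2)\<leftarrow>R. \<epsilon>H r1 * G t1 (r2 * t2))" for t1 t2
      unfolding psi_def by (rule lin_sumH[where g="\<lambda>z. G t1 (z * t2)"]) (intro linrules Gl H.lin_comp[OF Gl(2)])
    then show ?thesis by simp
  qed
  finally have "(\<Sum>(r1,r2)\<leftarrow>R. \<Sum>(p,q)\<leftarrow>\<Delta>H r1. \<epsilon>H p * G q r2) = (\<Sum>(t1,t2)\<leftarrow>R. G t1 (psi * t2))" .
  moreover have "(\<Sum>(p,q)\<leftarrow>\<Delta>H r1. \<epsilon>H p * G q r2) = G r1 r2" for r1 r2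
    by (rule H_counitL_lin) (rule Gl)
  ultimately show "tsum2 G R = tsum2 G (map (\<lambda>(r,t). (1 * r, psi * t)) R)"
    unfolding tsum2_def by (simp add: o_def split_def)
qed

lemma R_phi: "teq2 sH sH R (map (\<lambda>(r,t). (phi * r, 1 * t)) R)"
  unfolding teq2_def
proof (intro allI impI)
  fix G assume G: "bilinear_form sH sH G"
  note Gl = H.bil_lin1[OF G] H.bil_lin2[OF G]
  have "(\<Sum>(r1,r2)\<leftarrow>R. \<Sum>(p,q)\<leftarrow>\<Delta>H r2. G r1 p * \<epsilon>H q) = (\<Sum>(r1,r2)\<leftarrow>R. \<Sum>(t1,t2)\<leftarrow>R. G (r1 * t1) t2 * \<epsilon>H r2)"
    by (rule QT2) (intro linrules Gl H.lin_comp[OF Gl(1)] H.lin_comp[OF Gl(2)])+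
  also have "\<dots> = (\<Sum>(t1,t2)\<leftarrow>R. \<Sum>(r1,r2)\<leftarrow>R. \<epsilon>H r2 * G (r1 * t1) t2)"
    unfolding split_def by (subst sum_list_swap) (simp add: mult.commute)
  also have "\<dots> = (\<Sum>(t1,t2)\<leftarrow>R. G (phi * t1) t2)"
  proof -
    have "G (phi * t1) t2 = (\<Sum>(r1,r2)\<leftarrow>R. \<epsilon>H r2 * G (r1 * t1) t2)" for t1 t2
      unfolding phi_def by (rule lin_sumH[where g="\<lambda>z. G (z * t1) t2"]) (intro linrules Gl H.lin_comp[OF Gl(1)])
    then show ?thesis by simp
  qed
  finally have "(\<Sum>(r1,r2)\<leftarrow>R. \<Sum>(p,q)\<leftarrow>\<Delta>H r2. G r1 p * \<epsilon>H q) = (\<Sum>(t1,t2)\<leftarrow>R. G (phi * t1) t2)" .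
  moreover have "(\<Sum>(p,q)\<leftarrow>\<Delta>H r2. G r1 p * \<epsilon>H q) = G r1 r2" for r1 r2
    using H_counitR_lin[OF Gl(2), of r1 r2] by (simp add: mult.commute)
  ultimately show "tsum2 G R = tsum2 G (map (\<lambda>(r,t). (phi * r, 1 * t)) R)"
    unfolding tsum2_def by (simp add: o_def split_def)
qed


lemma inv_trick:
  assumes B: "bilinear_form sH sH B" and RR: "teq2 sH sH R (map (\<lambda>(r,t). (a * r, b * t)) R)"
  shows "B 1 1 = B a b"
proof -
  obtain Rinv where inv1: "teq2 sH sH (tmul R Rinv) [(1, 1)]" using Rinv_ex by blast
  note Bl = H.bil_lin1[OF B] H.bil_lin2[OF B]
  have B': "bilinear_form sH sH (\<lambda>p q. B (a * p) (b * q))"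
    unfolding bilinear_form_def
    by (intro allI conjI H.lin_comp[OF Bl(1)] H.lin_comp[OF Bl(2)] linrules)
  have "B 1 1 = tsum2 B (tmul R Rinv)"
    using inv1 B unfolding teq2_def tsum2_def by simp
  also have "\<dots> = tsum2 B (tmul (map (\<lambda>(r,t). (a * r, b * t)) R) Rinv)"
    using H.teq2_tmul_right[OF RR, of Rinv] B unfolding teq2_def by blast
  also have "\<dots> = tsum2 (\<lambda>p q. B (a * p) (b * q)) (tmul R Rinv)"
    unfolding tmul_map_left tsum2_def by (simp add: o_def split_def)
  also have "\<dots> = B a b"
    using inv1 B' unfolding teq2_def tsum2_def by simp
  finally show ?thesis .
qed

lemma E1: "(\<Sum>(r1,r2)\<leftarrow>R. \<epsilon>H r1 * P r2 c) = \<epsilon>A c"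
proof -
  have B: "bilinear_form sH sH (\<lambda>p q. \<epsilon>H p * P q c)"
    unfolding bilinear_form_def by (intro allI conjI linrules)
  have "P psi c = (\<Sum>(r1,r2)\<leftarrow>R. \<epsilon>H r1 * P r2 c)"
    unfolding psi_def by (rule lin_sumH) (rule P_lin1)
  moreover have "\<epsilon>H 1 * P 1 c = \<epsilon>H 1 * P psi c" using inv_trick[OF B R_psi] by simp
  ultimately show ?thesis by (simp add: H_eps_1 P_1a)
qed

lemma E2: "(\<Sum>(r1,r2)\<leftarrow>R. P r1 c * \<epsilon>H r2) = \<epsilon>A c"
proof -
  have B: "bilinear_form sH sH (\<lambda>p q. P p c * \<epsilon>H q)"
    unfolding bilinear_form_def by (intro allI conjI linrules)
  have "P phi c = (\<Sum>(r1,r2)\<leftarrow>R. \<epsilon>H r2 * P r1 c)"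
    unfolding phi_def by (rule lin_sumH) (rule P_lin1)
  moreover have "P 1 c * \<epsilon>H 1 = P phi c * \<epsilon>H 1" using inv_trick[OF B R_phi] by simp
  ultimately show ?thesis by (simp add: H_eps_1 P_1a mult.commute)
qed


abbreviation "Q \<equiv> Qmap sH P R"

lemma PQ: "P (Q a) c = (\<Sum>(t1,t2)\<leftarrow>R. \<Sum>(r1,r2)\<leftarrow>R. P (t2 * r1) a * P (t1 * r2) c)"
  unfolding Qmap_def
  by (simp add: linear_sum_list[OF P_lin1] sum_list_concat_map o_def split_def linear_scale[OF P_lin1])

lemma eps_Q: "\<epsilon>H (Q a) = \<epsilon>A a"
proof -
  have "\<epsilon>H (Q a) = (\<Sum>(t1,t2)\<leftarrow>R. \<Sum>(r1,r2)\<leftarrow>R. \<Sum>(p,q)\<leftarrow>\<Delta>A a. (\<epsilon>H t1 * P t2 p) * (P r1 q * \<epsilon>H r2))"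
    unfolding P_h1[symmetric, of "Q a"] PQ unfolding P_h1 P_mulH H_eps_mult by (simp only: sum2_multc[symmetric]) (simp add: mult_ac)
  also have "\<dots> = (\<Sum>(p,q)\<leftarrow>\<Delta>A a. (\<Sum>(t1,t2)\<leftarrow>R. \<epsilon>H t1 * P t2 p) * (\<Sum>(r1,r2)\<leftarrow>R. P r1 q * \<epsilon>H r2))"
    by (simp only: sum2_multc[symmetric], simp only: sum2_cmult[symmetric], subst sum2_swap[where xs="\<Delta>A a"], subst sum2_swap[where xs="\<Delta>A a"], rule refl)
  also have "\<dots> = (\<Sum>(p,q)\<leftarrow>\<Delta>A a. \<epsilon>A p * \<epsilon>A q)" by (simp add: E1 E2)
  also have "\<dots> = \<epsilon>A a" by (rule A_counitL_lin[OF A_eps_lin])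
  finally show ?thesis .
qed


lemma Rcomm: "teq2 sH sH (tmul (flip (\<Delta>H h)) R) (tmul R (\<Delta>H h))"
proof -
  obtain Rinv where i2: "teq2 sH sH (tmul Rinv R) [(1, 1)]"
     and c: "teq2 sH sH (flip (\<Delta>H h)) (tmul (tmul R (\<Delta>H h)) Rinv)" using Rinv_ex by blast
  have "teq2 sH sH (tmul (flip (\<Delta>H h)) R) (tmul (tmul (tmul R (\<Delta>H h)) Rinv) R)"
    by (rule H.teq2_tmul_right[OF c])
  also have "tmul (tmul (tmul R (\<Delta>H h)) Rinv) R = tmul (tmul R (\<Delta>H h)) (tmul Rinv R)"
    by (rule tmul_assoc)
  finally have 1: "teq2 sH sH (tmul (flip (\<Delta>H h)) R) (tmul (tmul R (\<Delta>H h)) (tmul Rinv R))" .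
  have "teq2 sH sH (tmul (tmul R (\<Delta>H h)) (tmul Rinv R)) (tmul (tmul R (\<Delta>H h)) [(1,1)])"
    by (rule H.teq2_tmul_left[OF i2])
  then show ?thesis using H.teq2_trans[OF 1] by simp
qed

abbreviation "X \<equiv> tmul (flip R) R"

lemma flip_flip[simp]: "flip (flip Y) = Y"
  unfolding flip_def by (induct Y) auto

lemma Xcomm: "teq2 sH sH (tmul X (\<Delta>H h)) (tmul (\<Delta>H h) X)"
proof -
  have "tmul X (\<Delta>H h) = tmul (flip R) (tmul R (\<Delta>H h))" by (rule tmul_assoc)
  moreover have "teq2 sH sH (tmul (flip R) (tmul R (\<Delta>H h))) (tmul (flip R) (tmul (flip (\<Delta>H h)) R))"
    by (rule H.teq2_tmul_left[OF H.teq2_sym[OF Rcomm]])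
  moreover have "tmul (flip R) (tmul (flip (\<Delta>H h)) R) = tmul (tmul (flip R) (flip (\<Delta>H h))) R"
    by (rule tmul_assoc[symmetric])
  moreover have "teq2 sH sH (tmul (flip R) (flip (\<Delta>H h))) (tmul (\<Delta>H h) (flip R))"
    using H.teq2_flip[OF Rcomm[of h]] by (simp add: flip_tmul H.teq2_sym)
  then have "teq2 sH sH (tmul (tmul (flip R) (flip (\<Delta>H h))) R) (tmul (tmul (\<Delta>H h) (flip R)) R)"
    by (rule H.teq2_tmul_right)
  moreover have "tmul (tmul (\<Delta>H h) (flip R)) R = tmul (\<Delta>H h) X" by (rule tmul_assoc)
  ultimately show ?thesis using H.teq2_trans by metis
qed

lemma sum_tmul: "(\<Sum>(x1,x2)\<leftarrow>tmul A B. (g x1 x2::complex)) = (\<Sum>(a1,a2)\<leftarrow>A. \<Sum>(b1,b2)\<leftarrow>B. g (a1*b1) (a2*b2))"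
  using tsum2_tmul[of g A B] unfolding tsum2_def .
lemma sum_flip: "(\<Sum>(x1,x2)\<leftarrow>flip A. g x1 x2) = (\<Sum>(a1,a2)\<leftarrow>A. g a2 a1)"
  unfolding flip_def by (simp add: o_def split_def)

lemma Xcomm_s:
  assumes "\<And>y. H.lin (\<lambda>x. M x y)" "\<And>x. H.lin (\<lambda>y. M x y)"
  shows "(\<Sum>(t1,t2)\<leftarrow>R. \<Sum>(r1,r2)\<leftarrow>R. \<Sum>(p,q)\<leftarrow>\<Delta>H h. M (t2*r1*p) (t1*r2*q))
       = (\<Sum>(p,q)\<leftarrow>\<Delta>H h. \<Sum>(t1,t2)\<leftarrow>R. \<Sum>(r1,r2)\<leftarrow>R. M (p*(t2*r1)) (q*(t1*r2)))"
proof -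
  have "bilinear_form sH sH M" using assms unfolding bilinear_form_def by blast
  then have "tsum2 M (tmul X (\<Delta>H h)) = tsum2 M (tmul (\<Delta>H h) X)" using Xcomm unfolding teq2_def by blast
  then show ?thesis unfolding tsum2_def sum_tmul sum_flip .
qed



lemma sw3_P: "(\<Sum>(a1,a2,a3)\<leftarrow>sw3 \<Delta>A a. P x a1 * P y a2 * P z a3) = P (x * (y * z)) a"
  unfolding sw3_def P_mulH
  by (simp add: sum_list_concat_map o_def split_def mult.assoc sum_list_const_mult)

lemma RHS3: "P (Q a) (b * c) = (\<Sum>(t1,t2)\<leftarrow>R. \<Sum>(u1,u2)\<leftarrow>R. \<Sum>(r1,r2)\<leftarrow>R. \<Sum>(s1,s2)\<leftarrow>R.
    P (t2 * u2 * (r1 * s1)) a * (P (t1 * s2) b * P (u1 * r2) c))"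
proof -
  have "P (Q a) (b * c) = (\<Sum>(t1,t2)\<leftarrow>R. \<Sum>(r1,r2)\<leftarrow>R. P (t2 * r1) a * (\<Sum>(p,q)\<leftarrow>\<Delta>H t1. \<Sum>(p',q')\<leftarrow>\<Delta>H r2. P (p*p') b * P (q*q') c))"
  proof -
    have D: "(\<Sum>(p,q)\<leftarrow>\<Delta>H (x*y). P p b * P q c) = (\<Sum>(p,q)\<leftarrow>\<Delta>H x. \<Sum>(p',q')\<leftarrow>\<Delta>H y. P (p*p') b * P (q*q') c)" for x y
      by (rule DmulH) (intro linrules)+
    show ?thesis unfolding PQ unfolding P_mulA D ..
  qed
  also have "\<dots> = (\<Sum>(t1,t2)\<leftarrow>R. \<Sum>(p,q)\<leftarrow>\<Delta>H t1. \<Sum>(r1,r2)\<leftarrow>R. \<Sum>(p',q')\<leftarrow>\<Delta>H r2. P (t2 * r1) a * (P (p*p') b * P (q*q') c))"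
  proof -
    have "(\<Sum>(r1,r2)\<leftarrow>R. P (t2 * r1) a * (\<Sum>(p,q)\<leftarrow>\<Delta>H t1. \<Sum>(p',q')\<leftarrow>\<Delta>H r2. P (p*p') b * P (q*q') c))
      = (\<Sum>(p,q)\<leftarrow>\<Delta>H t1. \<Sum>(r1,r2)\<leftarrow>R. \<Sum>(p',q')\<leftarrow>\<Delta>H r2. P (t2 * r1) a * (P (p*p') b * P (q*q') c))" for t1 t2
      by (simp only: sum2_cmult[symmetric]) (rule sum2_swap)
    then show ?thesis by simp
  qed
  also have "\<dots> = (\<Sum>(t1,t2)\<leftarrow>R. \<Sum>(u1,u2)\<leftarrow>R. \<Sum>(r1,r2)\<leftarrow>R. \<Sum>(p',q')\<leftarrow>\<Delta>H r2. P (t2 * u2 * r1) a * (P (t1*p') b * P (u1*q') c))"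
    by (rule QT1[where F="\<lambda>p q z. \<Sum>(r1,r2)\<leftarrow>R. \<Sum>(p',q')\<leftarrow>\<Delta>H r2. P (z * r1) a * (P (p*p') b * P (q*q') c)"])
       (intro linrules)+
  also have "\<dots> = (\<Sum>(t1,t2)\<leftarrow>R. \<Sum>(u1,u2)\<leftarrow>R. \<Sum>(r1,r2)\<leftarrow>R. \<Sum>(s1,s2)\<leftarrow>R. P (t2 * u2 * (r1 * s1)) a * (P (t1 * s2) b * P (u1 * r2) c))"
  proof -
    have "(\<Sum>(r1,r2)\<leftarrow>R. \<Sum>(p',q')\<leftarrow>\<Delta>H r2. P (t2 * u2 * r1) a * (P (t1*p') b * P (u1*q') c))
       = (\<Sum>(r1,r2)\<leftarrow>R. \<Sum>(s1,s2)\<leftarrow>R. P (t2 * u2 * (r1 * s1)) a * (P (t1 * s2) b * P (u1 * r2) c))" for t1 t2 u1 u2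
      by (rule QT2[where F="\<lambda>x p' q'. P (t2 * u2 * x) a * (P (t1*p') b * P (u1*q') c)"]) (intro linrules)+
    then show ?thesis by simp
  qed
  finally show ?thesis .
qed


lemma LHS3: "(\<Sum>(t1,t2)\<leftarrow>R. \<Sum>(r1,r2)\<leftarrow>R. \<Sum>(a1,a2,a3)\<leftarrow>sw3 \<Delta>A a. (P (t1*r2) b * P t2 a1 * P r1 a3) * P (Q a2) c)
   = P (Q a) (b * c)"
proof -
  have step1: "(\<Sum>(a1,a2,a3)\<leftarrow>sw3 \<Delta>A a. (P (t1*r2) b * P t2 a1 * P r1 a3) * P (Q a2) c)
     = (\<Sum>(u1,u2)\<leftarrow>R. \<Sum>(v1,v2)\<leftarrow>R. P (t1*r2) b * P (u1*v2) c * P (t2*((u2*v1)*r1)) a)" for t1 t2 r1 r2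
  proof -
    have "(\<Sum>(a1,a2,a3)\<leftarrow>sw3 \<Delta>A a. (P (t1*r2) b * P t2 a1 * P r1 a3) * P (Q a2) c)
       = (\<Sum>(a1,a2,a3)\<leftarrow>sw3 \<Delta>A a. \<Sum>(u1,u2)\<leftarrow>R. \<Sum>(v1,v2)\<leftarrow>R. (P (t1*r2) b * P t2 a1 * P r1 a3) * (P (u2 * v1) a2 * P (u1 * v2) c))"
      unfolding PQ by (simp only: sum2_cmult[symmetric])
    also have "\<dots> = (\<Sum>(u1,u2)\<leftarrow>R. \<Sum>(v1,v2)\<leftarrow>R. \<Sum>(a1,a2,a3)\<leftarrow>sw3 \<Delta>A a. (P (t1*r2) b * P t2 a1 * P r1 a3) * (P (u2 * v1) a2 * P (u1 * v2) c))"
      by (subst sum32_swap, subst sum32_swap, rule refl)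
    also have "\<dots> = (\<Sum>(u1,u2)\<leftarrow>R. \<Sum>(v1,v2)\<leftarrow>R. P (t1*r2) b * P (u1*v2) c * P (t2*((u2*v1)*r1)) a)"
      by (simp only: sw3_P[symmetric], simp only: sum3_cmult[symmetric], simp only: mult_ac)
    finally show ?thesis .
  qed
  have step2: "(\<Sum>(r1,r2)\<leftarrow>R. \<Sum>(u1,u2)\<leftarrow>R. \<Sum>(v1,v2)\<leftarrow>R. P (t1*r2) b * P (u1*v2) c * P (t2*((u2*v1)*r1)) a)
     = (\<Sum>(u1,u2)\<leftarrow>R. \<Sum>(v1,v2)\<leftarrow>R. \<Sum>(r1,r2)\<leftarrow>R. P (t1*r2) b * P (u1*v2) c * P (t2*((u2*v1)*r1)) a)" for t1 t2
  proof -
    have "(\<Sum>(r1,r2)\<leftarrow>R. \<Sum>(v1,v2)\<leftarrow>R. P (t1*r2) b * P (u1*v2) c * P (t2*((u2*v1)*r1)) a)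
      = (\<Sum>(v1,v2)\<leftarrow>R. \<Sum>(r1,r2)\<leftarrow>R. P (t1*r2) b * P (u1*v2) c * P (t2*((u2*v1)*r1)) a)" for u1 u2
      by (rule sum2_swap)
    then show ?thesis by (subst sum2_swap) simp
  qed
  show ?thesis unfolding RHS3 step1 step2 by (simp add: mult_ac)
qed


lemma Q_one: "Q 1 = 1"
proof (rule extH)
  fix c
  have "P (Q 1) c = (\<Sum>(t1,t2)\<leftarrow>R. \<Sum>(r1,r2)\<leftarrow>R. \<Sum>(p,q)\<leftarrow>\<Delta>A c. (P t1 p * \<epsilon>H t2) * (\<epsilon>H r1 * P r2 q))"
    unfolding PQ unfolding P_h1 P_mulH H_eps_mult by (simp only: sum2_cmult[symmetric]) (simp add: mult_ac)
  also have "\<dots> = (\<Sum>(p,q)\<leftarrow>\<Delta>A c. (\<Sum>(t1,t2)\<leftarrow>R. P t1 p * \<epsilon>H t2) * (\<Sum>(r1,r2)\<leftarrow>R. \<epsilon>H r1 * P r2 q))"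
    by (simp only: sum2_multc[symmetric], simp only: sum2_cmult[symmetric], subst sum2_swap[where xs="\<Delta>A c"], subst sum2_swap[where xs="\<Delta>A c"], rule refl)
  also have "\<dots> = (\<Sum>(p,q)\<leftarrow>\<Delta>A c. \<epsilon>A p * \<epsilon>A q)" by (simp add: E1 E2)
  also have "\<dots> = \<epsilon>A c" by (rule A_counitL_lin[OF A_eps_lin])
  finally show "P (Q 1) c = P 1 c" by (simp add: P_1a)
qed

lemma act_A:
  assumes linQ: "Vector_Spaces.linear sA sH Q"
  shows "Q (actA_A sH sA \<Delta>A P R b a) = actA_H sH \<Delta>H P b (Q a)"
proof -
  define T where "T = sum_list [sA (P (t1 * r2) b * P t2 a1 * P r1 a3) a2.
                 (t1, t2) \<leftarrow> R, (r1, r2) \<leftarrow> R, (a1, a2, a3) \<leftarrow> sw3 \<Delta>A a]"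
  have g: "A.lin (\<lambda>z. P (Q z) c)" for c
    using Vector_Spaces.linear_compose[OF linQ P_lin1] unfolding o_def .
  have "Q T = (\<Sum>(p,q)\<leftarrow>\<Delta>H (Q a). sH (P p b) q)"
  proof (rule extH)
    fix c
    have "P (Q T) c = (\<Sum>(t1,t2)\<leftarrow>R. \<Sum>(r1,r2)\<leftarrow>R. \<Sum>(a1,a2,a3)\<leftarrow>sw3 \<Delta>A a. (P (t1*r2) b * P t2 a1 * P r1 a3) * P (Q a2) c)"
      unfolding T_def by (simp add: linear_sum_list[OF g] sum_list_concat_map o_def split_def linear_scale[OF g])
    also have "\<dots> = P (Q a) (b * c)" by (rule LHS3)
    also have "\<dots> = P (\<Sum>(p,q)\<leftarrow>\<Delta>H (Q a). sH (P p b) q) c"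
      unfolding P_mulA by (rule lin_sumH[symmetric]) (rule P_lin1)
    finally show "P (Q T) c = P (\<Sum>(p,q)\<leftarrow>\<Delta>H (Q a). sH (P p b) q) c" .
  qed
  moreover have "actA_A sH sA \<Delta>A P R b a = T - sA (P (Q a) b) 1"
    unfolding actA_A_def T_def ..
  ultimately show ?thesis
    unfolding actA_H_def by (simp add: linear_diff[OF linQ] linear_scale[OF linQ] Q_one)
qed



lemma ADJ: "(\<Sum>(a1,a2,a3)\<leftarrow>sw3 \<Delta>A a. P h (SA a1 * a3) * P y a2) = (\<Sum>(h1,h2)\<leftarrow>\<Delta>H h. P (SH h1 * (y * h2)) a)"
proof -
  have "(\<Sum>(h1,h2)\<leftarrow>\<Delta>H h. P (SH h1 * (y * h2)) a)
      = (\<Sum>(h1,h2)\<leftarrow>\<Delta>H h. \<Sum>(a1,a')\<leftarrow>\<Delta>A a. \<Sum>(u,v)\<leftarrow>\<Delta>A a'. P y u * (P h1 (SA a1) * P h2 v))"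
    unfolding P_mulH P_S by (simp only: sum2_cmult[symmetric]) (simp only: mult_ac)
  also have "\<dots> = (\<Sum>(a1,a')\<leftarrow>\<Delta>A a. \<Sum>(u,v)\<leftarrow>\<Delta>A a'. \<Sum>(h1,h2)\<leftarrow>\<Delta>H h. P y u * (P h1 (SA a1) * P h2 v))"
    by (subst sum2_swap, subst sum2_swap, rule refl)
  also have "\<dots> = (\<Sum>(a1,a2,a3)\<leftarrow>sw3 \<Delta>A a. P h (SA a1 * a3) * P y a2)"
    unfolding sw3_def P_mulA
    by (simp add: sum_list_concat_map o_def split_def sum_list_const_mult mult_ac)
  finally show ?thesis ..
qed


lemma Xcomm_s2:
  assumes "\<And>y. H.lin (\<lambda>x. M x y)" "\<And>x. H.lin (\<lambda>y. M x y)"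
  shows "(\<Sum>(p,q)\<leftarrow>\<Delta>H h. \<Sum>(t1,t2)\<leftarrow>R. \<Sum>(r1,r2)\<leftarrow>R. M (p*(t2*r1)) (q*(t1*r2)))
       = (\<Sum>(p,q)\<leftarrow>\<Delta>H h. \<Sum>(t1,t2)\<leftarrow>R. \<Sum>(r1,r2)\<leftarrow>R. M (t2*r1*p) (t1*r2*q))"
proof -
  have "(\<Sum>(r1,r2)\<leftarrow>R. \<Sum>(p,q)\<leftarrow>\<Delta>H h. M (t2*r1*p) (t1*r2*q)) = (\<Sum>(p,q)\<leftarrow>\<Delta>H h. \<Sum>(r1,r2)\<leftarrow>R. M (t2*r1*p) (t1*r2*q))" for t1 t2
    by (rule sum2_swap)
  then have "(\<Sum>(t1,t2)\<leftarrow>R. \<Sum>(r1,r2)\<leftarrow>R. \<Sum>(p,q)\<leftarrow>\<Delta>H h. M (t2*r1*p) (t1*r2*q))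
     = (\<Sum>(p,q)\<leftarrow>\<Delta>H h. \<Sum>(t1,t2)\<leftarrow>R. \<Sum>(r1,r2)\<leftarrow>R. M (t2*r1*p) (t1*r2*q))"
    by (simp only:) (rule sum2_swap)
  then show ?thesis using Xcomm_s[OF assms, of h] by simp
qed

lemma INV:
  "(\<Sum>(h1,h2)\<leftarrow>\<Delta>H h. \<Sum>(t1,t2)\<leftarrow>R. \<Sum>(r1,r2)\<leftarrow>R. P (t2*r1) a * P (h1 * (t1*r2) * SH h2) c)
 = (\<Sum>(h1,h2)\<leftarrow>\<Delta>H h. \<Sum>(t1,t2)\<leftarrow>R. \<Sum>(r1,r2)\<leftarrow>R. P (SH h1 * ((t2*r1) * h2)) a * P (t1*r2) c)"
proof -
  have inner: "(\<Sum>(t1,t2)\<leftarrow>R. \<Sum>(r1,r2)\<leftarrow>R. P (t2*r1) a * P (h1 * (t1*r2) * SH h2) c)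
     = (\<Sum>(p,q)\<leftarrow>\<Delta>H h1. \<Sum>(p1,p2)\<leftarrow>\<Delta>H p. \<Sum>(t1,t2)\<leftarrow>R. \<Sum>(r1,r2)\<leftarrow>R. P (SH p1 * (t2*r1*p2)) a * P (t1*r2*q * SH h2) c)"
    for h1 h2
  proof -
    have "(\<Sum>(t1,t2)\<leftarrow>R. \<Sum>(r1,r2)\<leftarrow>R. P (t2*r1) a * P (h1 * (t1*r2) * SH h2) c)
       = (\<Sum>(p,q)\<leftarrow>\<Delta>H h1. \<epsilon>H p * (\<Sum>(t1,t2)\<leftarrow>R. \<Sum>(r1,r2)\<leftarrow>R. P (t2*r1) a * P (q * (t1*r2) * SH h2) c))"
      by (rule H_counitL_lin[where g="\<lambda>z. \<Sum>(t1,t2)\<leftarrow>R. \<Sum>(r1,r2)\<leftarrow>R. P (t2*r1) a * P (z * (t1*r2) * SH h2) c", symmetric])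
         (intro linrules)
    also have "\<dots> = (\<Sum>(p,q)\<leftarrow>\<Delta>H h1. \<Sum>(p1,p2)\<leftarrow>\<Delta>H p. \<Sum>(t1,t2)\<leftarrow>R. \<Sum>(r1,r2)\<leftarrow>R. P (SH p1 * p2 * (t2*r1)) a * P (q * (t1*r2) * SH h2) c)"
    proof -
      have "\<epsilon>H p * (\<Sum>(t1,t2)\<leftarrow>R. \<Sum>(r1,r2)\<leftarrow>R. P (t2*r1) a * P (q * (t1*r2) * SH h2) c)
         = (\<Sum>(p1,p2)\<leftarrow>\<Delta>H p. \<Sum>(t1,t2)\<leftarrow>R. \<Sum>(r1,r2)\<leftarrow>R. P (SH p1 * p2 * (t2*r1)) a * P (q * (t1*r2) * SH h2) c)" for p q
      proof -
        have L: "H.lin (\<lambda>z. \<Sum>(t1,t2)\<leftarrow>R. \<Sum>(r1,r2)\<leftarrow>R. P (z * (t2*r1)) a * P (q * (t1*r2) * SH h2) c)"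
          by (intro linrules)
        show ?thesis using H_antiL_lin[OF L, of p] by (simp only: mult_1_left)
      qed
      then show ?thesis by simp
    qed
    also have "\<dots> = (\<Sum>(p,q)\<leftarrow>\<Delta>H h1. \<Sum>(q1,q2)\<leftarrow>\<Delta>H q. \<Sum>(t1,t2)\<leftarrow>R. \<Sum>(r1,r2)\<leftarrow>R. P (SH p * q1 * (t2*r1)) a * P (q2 * (t1*r2) * SH h2) c)"
      by (rule coassocH[where F="\<lambda>u v w. \<Sum>(t1,t2)\<leftarrow>R. \<Sum>(r1,r2)\<leftarrow>R. P (SH u * v * (t2*r1)) a * P (w * (t1*r2) * SH h2) c"])
         (intro linrules)+
    also have "\<dots> = (\<Sum>(p,q)\<leftarrow>\<Delta>H h1. \<Sum>(q1,q2)\<leftarrow>\<Delta>H q. \<Sum>(t1,t2)\<leftarrow>R. \<Sum>(r1,r2)\<leftarrow>R. P (SH p * (t2*r1*q1)) a * P (t1*r2*q2 * SH h2) c)"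
    proof -
      have "(\<Sum>(q1,q2)\<leftarrow>\<Delta>H q. \<Sum>(t1,t2)\<leftarrow>R. \<Sum>(r1,r2)\<leftarrow>R. P (SH p * (q1 * (t2*r1))) a * P (q2 * (t1*r2) * SH h2) c)
         = (\<Sum>(q1,q2)\<leftarrow>\<Delta>H q. \<Sum>(t1,t2)\<leftarrow>R. \<Sum>(r1,r2)\<leftarrow>R. P (SH p * (t2*r1*q1)) a * P (t1*r2*q2 * SH h2) c)" for p q
        by (rule Xcomm_s2[where M="\<lambda>x y. P (SH p * x) a * P (y * SH h2) c"]) (intro linrules)+
      then show ?thesis by (simp add: mult.assoc)
    qed
    also have "\<dots> = (\<Sum>(p,q)\<leftarrow>\<Delta>H h1. \<Sum>(p1,p2)\<leftarrow>\<Delta>H p. \<Sum>(t1,t2)\<leftarrow>R. \<Sum>(r1,r2)\<leftarrow>R. P (SH p1 * (t2*r1*p2)) a * P (t1*r2*q * SH h2) c)"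
      by (rule coassocH[where F="\<lambda>u v w. \<Sum>(t1,t2)\<leftarrow>R. \<Sum>(r1,r2)\<leftarrow>R. P (SH u * (t2*r1*v)) a * P (t1*r2*w * SH h2) c", symmetric])
         (intro linrules)+
    finally show ?thesis .
  qed
  have "(\<Sum>(h1,h2)\<leftarrow>\<Delta>H h. \<Sum>(t1,t2)\<leftarrow>R. \<Sum>(r1,r2)\<leftarrow>R. P (t2*r1) a * P (h1 * (t1*r2) * SH h2) c)
     = (\<Sum>(h1,h2)\<leftarrow>\<Delta>H h. \<Sum>(p,q)\<leftarrow>\<Delta>H h1. \<Sum>(p1,p2)\<leftarrow>\<Delta>H p. \<Sum>(t1,t2)\<leftarrow>R. \<Sum>(r1,r2)\<leftarrow>R. P (SH p1 * (t2*r1*p2)) a * P (t1*r2*q * SH h2) c)"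
    by (simp only: inner)
  also have "\<dots> = (\<Sum>(h1,h2)\<leftarrow>\<Delta>H h. \<Sum>(p,q)\<leftarrow>\<Delta>H h2. \<Sum>(p1,p2)\<leftarrow>\<Delta>H h1. \<Sum>(t1,t2)\<leftarrow>R. \<Sum>(r1,r2)\<leftarrow>R. P (SH p1 * (t2*r1*p2)) a * P (t1*r2*p * SH q) c)"
    by (rule coassocH[where F="\<lambda>u w z. \<Sum>(p1,p2)\<leftarrow>\<Delta>H u. \<Sum>(t1,t2)\<leftarrow>R. \<Sum>(r1,r2)\<leftarrow>R. P (SH p1 * (t2*r1*p2)) a * P (t1*r2*w * SH z) c"])
       (intro linrules)+
  also have "\<dots> = (\<Sum>(h1,h2)\<leftarrow>\<Delta>H h. \<epsilon>H h2 * (\<Sum>(p1,p2)\<leftarrow>\<Delta>H h1. \<Sum>(t1,t2)\<leftarrow>R. \<Sum>(r1,r2)\<leftarrow>R. P (SH p1 * (t2*r1*p2)) a * P (t1*r2) c))"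
  proof -
    have "(\<Sum>(p,q)\<leftarrow>\<Delta>H h2. \<Sum>(p1,p2)\<leftarrow>\<Delta>H h1. \<Sum>(t1,t2)\<leftarrow>R. \<Sum>(r1,r2)\<leftarrow>R. P (SH p1 * (t2*r1*p2)) a * P (t1*r2*p * SH q) c)
       = \<epsilon>H h2 * (\<Sum>(p1,p2)\<leftarrow>\<Delta>H h1. \<Sum>(t1,t2)\<leftarrow>R. \<Sum>(r1,r2)\<leftarrow>R. P (SH p1 * (t2*r1*p2)) a * P (t1*r2) c)" for h1 h2
    proof -
      have L: "H.lin (\<lambda>z. \<Sum>(p1,p2)\<leftarrow>\<Delta>H h1. \<Sum>(t1,t2)\<leftarrow>R. \<Sum>(r1,r2)\<leftarrow>R. P (SH p1 * (t2*r1*p2)) a * P (t1*r2*z) c)"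
        by (intro linrules)
      show ?thesis using H_antiR_lin[OF L, of h2] by (simp only: mult_1_right mult.assoc)
    qed
    then show ?thesis by simp
  qed
  also have "\<dots> = (\<Sum>(p1,p2)\<leftarrow>\<Delta>H h. \<Sum>(t1,t2)\<leftarrow>R. \<Sum>(r1,r2)\<leftarrow>R. P (SH p1 * (t2*r1*p2)) a * P (t1*r2) c)"
    by (rule H_counitR_lin) (intro linrules)
  finally show ?thesis by (simp add: mult.assoc)
qed


lemma gQ: "H.lin g \<Longrightarrow> g (Q a) = (\<Sum>(t1,t2)\<leftarrow>R. \<Sum>(r1,r2)\<leftarrow>R. P (t2 * r1) a * g (t1 * r2))"
  unfolding Qmap_def
  by (simp add: linear_sum_list sum_list_concat_map o_def split_def linear_scale)

lemma act_H:
  assumes linQ: "Vector_Spaces.linear sA sH Q"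
  shows "Q (actH_A sA \<Delta>A SA P h a) = actH_H \<Delta>H SH h (Q a)"
proof (rule extH)
  fix c
  have g: "A.lin (\<lambda>z. P (Q z) c)"
    using Vector_Spaces.linear_compose[OF linQ P_lin1] unfolding o_def .
  have "P (Q (actH_A sA \<Delta>A SA P h a)) c = (\<Sum>(a1,a2,a3)\<leftarrow>sw3 \<Delta>A a. P h (SA a1 * a3) * P (Q a2) c)"
    unfolding actH_A_def by (simp add: linear_sum_list[OF g] o_def split_def linear_scale[OF g])
  also have "\<dots> = (\<Sum>(a1,a2,a3)\<leftarrow>sw3 \<Delta>A a. \<Sum>(t1,t2)\<leftarrow>R. \<Sum>(r1,r2)\<leftarrow>R. P (t1*r2) c * (P h (SA a1 * a3) * P (t2*r1) a2))"
    unfolding PQ by (simp only: sum2_cmult[symmetric]) (simp only: mult_ac)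
  also have "\<dots> = (\<Sum>(t1,t2)\<leftarrow>R. \<Sum>(r1,r2)\<leftarrow>R. \<Sum>(a1,a2,a3)\<leftarrow>sw3 \<Delta>A a. P (t1*r2) c * (P h (SA a1 * a3) * P (t2*r1) a2))"
    by (subst sum32_swap, subst sum32_swap, rule refl)
  also have "\<dots> = (\<Sum>(t1,t2)\<leftarrow>R. \<Sum>(r1,r2)\<leftarrow>R. P (t1*r2) c * (\<Sum>(h1,h2)\<leftarrow>\<Delta>H h. P (SH h1 * ((t2*r1) * h2)) a))"
    by (simp only: sum3_cmult ADJ)
  also have "\<dots> = (\<Sum>(h1,h2)\<leftarrow>\<Delta>H h. \<Sum>(t1,t2)\<leftarrow>R. \<Sum>(r1,r2)\<leftarrow>R. P (SH h1 * ((t2*r1) * h2)) a * P (t1*r2) c)"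
  proof -
    have "(\<Sum>(r1,r2)\<leftarrow>R. \<Sum>(h1,h2)\<leftarrow>\<Delta>H h. P (SH h1 * ((t2*r1) * h2)) a * P (t1*r2) c)
       = (\<Sum>(h1,h2)\<leftarrow>\<Delta>H h. \<Sum>(r1,r2)\<leftarrow>R. P (SH h1 * ((t2*r1) * h2)) a * P (t1*r2) c)" for t1 t2
      by (rule sum2_swap)
    then have "(\<Sum>(t1,t2)\<leftarrow>R. \<Sum>(r1,r2)\<leftarrow>R. \<Sum>(h1,h2)\<leftarrow>\<Delta>H h. P (SH h1 * ((t2*r1) * h2)) a * P (t1*r2) c)
       = (\<Sum>(h1,h2)\<leftarrow>\<Delta>H h. \<Sum>(t1,t2)\<leftarrow>R. \<Sum>(r1,r2)\<leftarrow>R. P (SH h1 * ((t2*r1) * h2)) a * P (t1*r2) c)"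
      by (simp only:) (rule sum2_swap)
    moreover have "(\<Sum>(t1,t2)\<leftarrow>R. \<Sum>(r1,r2)\<leftarrow>R. P (t1*r2) c * (\<Sum>(h1,h2)\<leftarrow>\<Delta>H h. P (SH h1 * ((t2*r1) * h2)) a))
       = (\<Sum>(t1,t2)\<leftarrow>R. \<Sum>(r1,r2)\<leftarrow>R. \<Sum>(h1,h2)\<leftarrow>\<Delta>H h. P (SH h1 * ((t2*r1) * h2)) a * P (t1*r2) c)"
      by (simp only: sum2_cmult[symmetric]) (simp only: mult_ac)
    ultimately show ?thesis by simp
  qed
  also have "\<dots> = (\<Sum>(h1,h2)\<leftarrow>\<Delta>H h. \<Sum>(t1,t2)\<leftarrow>R. \<Sum>(r1,r2)\<leftarrow>R. P (t2*r1) a * P (h1 * (t1*r2) * SH h2) c)"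
    by (rule INV[symmetric])
  also have "\<dots> = (\<Sum>(h1,h2)\<leftarrow>\<Delta>H h. P (h1 * Q a * SH h2) c)"
  proof -
    have "P (h1 * Q a * SH h2) c = (\<Sum>(t1,t2)\<leftarrow>R. \<Sum>(r1,r2)\<leftarrow>R. P (t2*r1) a * P (h1 * (t1*r2) * SH h2) c)" for h1 h2
      by (rule gQ) (intro linrules)
    then show ?thesis by simp
  qed
  also have "\<dots> = P (actH_H \<Delta>H SH h (Q a)) c"
    unfolding actH_H_def by (simp add: linear_sum_list[OF P_lin1] o_def split_def)
  finally show "P (Q (actH_A sA \<Delta>A SA P h a)) c = P (actH_H \<Delta>H SH h (Q a)) c" .
qed

end



lemma subspace_iff: "vector_space s \<Longrightarrow> module.subspace s S \<longleftrightarrow>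
   (0 \<in> S \<and> (\<forall>x\<in>S. \<forall>y\<in>S. x + y \<in> S) \<and> (\<forall>c. \<forall>x\<in>S. s c x \<in> S))"
  by (rule module.subspace_def) (simp add: module_iff_vector_space)

theorem lemma4p1:
  fixes sH :: "complex \<Rightarrow> 'h::ring_1 \<Rightarrow> 'h" and \<Delta>H :: "'h \<Rightarrow> ('h \<times> 'h) list"
    and \<epsilon>H :: "'h \<Rightarrow> complex" and SH :: "'h \<Rightarrow> 'h"
    and sA :: "complex \<Rightarrow> 'a::ring_1 \<Rightarrow> 'a" and \<Delta>A :: "'a \<Rightarrow> ('a \<times> 'a) list"
    and \<epsilon>A :: "'a \<Rightarrow> complex" and SA :: "'a \<Rightarrow> 'a"
    and pair :: "'h \<Rightarrow> 'a \<Rightarrow> complex" and R :: "('h \<times> 'h) list"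
  assumes "hopf_algebra sH \<Delta>H \<epsilon>H SH"
    and "hopf_algebra sA \<Delta>A \<epsilon>A SA"
    and "hopf_pairing sH \<Delta>H \<epsilon>H SH sA \<Delta>A \<epsilon>A SA pair"
    and "nondegenerate_pairing pair"
    and "quasitriangular sH \<Delta>H R"
    and "Vector_Spaces.linear sA sH (Qmap sH pair R)"
    and "bij (Qmap sH pair R)"
  shows "bij_betw (Qmap sH pair R) {a. \<epsilon>A a = 0} {x. \<epsilon>H x = 0} \<and>
         (\<forall>h a. \<epsilon>A a = 0 \<longrightarrow>
            Qmap sH pair R (actH_A sA \<Delta>A SA pair h a) = actH_H \<Delta>H SH h (Qmap sH pair R a)) \<and>
         (\<forall>b a. \<epsilon>A a = 0 \<longrightarrow>
            Qmap sH pair R (actA_A sH sA \<Delta>A pair R b a) = actA_H sH \<Delta>H pair b (Qmap sH pair R a)) \<and>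
         (\<forall>W. double_subrep sH \<epsilon>H (actH_H \<Delta>H SH) (actA_H sH \<Delta>H pair) W \<longleftrightarrow>
            (\<exists>V. double_subrep sA \<epsilon>A (actH_A sA \<Delta>A SA pair) (actA_A sH sA \<Delta>A pair R) V \<and>
                 W = Qmap sH pair R ` V))"

proof -
  interpret qt sH \<Delta>H \<epsilon>H SH sA \<Delta>A \<epsilon>A SA pair R
    using assms(1-5) by (rule qt.intro)
  note linQ = assms(6) and bijQ = assms(7)
  have epsQ: "\<And>a. \<epsilon>H (Qmap sH pair R a) = \<epsilon>A a" by (rule eps_Q)
  have actH: "\<And>h a. Qmap sH pair R (actH_A sA \<Delta>A SA pair h a) = actH_H \<Delta>H SH h (Qmap sH pair R a)"
    by (rule act_H[OF linQ])
  have actA: "\<And>b a. Qmap sH pair R (actA_A sH sA \<Delta>A pair R b a) = actA_H sH \<Delta>H pair b (Qmap sH pair R a)"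
    by (rule act_A[OF linQ])
  have injQ: "inj (Qmap sH pair R)" and surjQ: "surj (Qmap sH pair R)" using bijQ by (auto simp: bij_def)
  have bb: "bij_betw (Qmap sH pair R) {a. \<epsilon>A a = 0} {x. \<epsilon>H x = 0}"
    unfolding bij_betw_def
  proof
    show "inj_on (Qmap sH pair R) {a. \<epsilon>A a = 0}" using injQ by (auto simp: inj_on_def)
    show "Qmap sH pair R ` {a. \<epsilon>A a = 0} = {x. \<epsilon>H x = 0}"
    proof
      show "Qmap sH pair R ` {a. \<epsilon>A a = 0} \<subseteq> {x. \<epsilon>H x = 0}" using epsQ by auto
      show "{x. \<epsilon>H x = 0} \<subseteq> Qmap sH pair R ` {a. \<epsilon>A a = 0}"
      proof
        fix x assume "x \<in> {x. \<epsilon>H x = 0}"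
        moreover obtain a where "x = Qmap sH pair R a" using surjQ by blast
        ultimately show "x \<in> Qmap sH pair R ` {a. \<epsilon>A a = 0}" using epsQ by auto
      qed
    qed
  qed
  have sub: "\<forall>W. double_subrep sH \<epsilon>H (actH_H \<Delta>H SH) (actA_H sH \<Delta>H pair) W \<longleftrightarrow>
            (\<exists>V. double_subrep sA \<epsilon>A (actH_A sA \<Delta>A SA pair) (actA_A sH sA \<Delta>A pair R) V \<and>
                 W = Qmap sH pair R ` V)"
  proof (intro allI iffI)
    fix W assume W: "double_subrep sH \<epsilon>H (actH_H \<Delta>H SH) (actA_H sH \<Delta>H pair) W"
    define V where "V = {a. Qmap sH pair R a \<in> W}"
    have "W = Qmap sH pair R ` V"
    proof
      show "W \<subseteq> Qmap sH pair R ` V"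
      proof
        fix x assume "x \<in> W"
        moreover obtain a where "x = Qmap sH pair R a" using surjQ by blast
        ultimately show "x \<in> Qmap sH pair R ` V" unfolding V_def by auto
      qed
      show "Qmap sH pair R ` V \<subseteq> W" unfolding V_def by auto
    qed
    moreover have "double_subrep sA \<epsilon>A (actH_A sA \<Delta>A SA pair) (actA_A sH sA \<Delta>A pair R) V"
      using W unfolding double_subrep_def subspace_iff[OF H.vs] subspace_iff[OF A.vs] V_def
      by (auto simp: epsQ actH actA linear_zero[OF linQ] linear_add[OF linQ] linear_scale[OF linQ])
    ultimately show "\<exists>V. double_subrep sA \<epsilon>A (actH_A sA \<Delta>A SA pair) (actA_A sH sA \<Delta>A pair R) V \<and>
                 W = Qmap sH pair R ` V" by blast
  next
    fix W assume "\<exists>V. double_subrep sA \<epsilon>A (actH_A sA \<Delta>A SA pair) (actA_A sH sA \<Delta>A pair R) V \<and>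
                 W = Qmap sH pair R ` V"
    then obtain V where V: "double_subrep sA \<epsilon>A (actH_A sA \<Delta>A SA pair) (actA_A sH sA \<Delta>A pair R) V"
      and WV: "W = Qmap sH pair R ` V" by blast
    have z: "0 \<in> V" using V unfolding double_subrep_def subspace_iff[OF A.vs] by auto
    show "double_subrep sH \<epsilon>H (actH_H \<Delta>H SH) (actA_H sH \<Delta>H pair) W"
      unfolding double_subrep_def subspace_iff[OF H.vs] WV
    proof (intro conjI allI impI ballI)
      show "Qmap sH pair R ` V \<subseteq> {v. \<epsilon>H v = 0}" using V epsQ unfolding double_subrep_def by auto
      show "0 \<in> Qmap sH pair R ` V" using z linear_zero[OF linQ] by (metis image_eqI)
    next
      fix x y assume "x \<in> Qmap sH pair R ` V" "y \<in> Qmap sH pair R ` V"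
      then obtain u v where "u \<in> V" "v \<in> V" "x = Qmap sH pair R u" "y = Qmap sH pair R v" by blast
      moreover have "u + v \<in> V" using V \<open>u \<in> V\<close> \<open>v \<in> V\<close> unfolding double_subrep_def subspace_iff[OF A.vs] by auto
      ultimately show "x + y \<in> Qmap sH pair R ` V" using linear_add[OF linQ, of u v] by (metis image_eqI)
    next
      fix c x assume "x \<in> Qmap sH pair R ` V"
      then obtain u where "u \<in> V" "x = Qmap sH pair R u" by blast
      moreover have "sA c u \<in> V" using V \<open>u \<in> V\<close> unfolding double_subrep_def subspace_iff[OF A.vs] by auto
      ultimately show "sH c x \<in> Qmap sH pair R ` V" using linear_scale[OF linQ, of c u] by (metis image_eqI)
    next
      fix h x assume "x \<in> Qmap sH pair R ` V"
      then obtain u where "u \<in> V" "x = Qmap sH pair R u" by blast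
      moreover have "actH_A sA \<Delta>A SA pair h u \<in> V" using V \<open>u \<in> V\<close> unfolding double_subrep_def by auto
      ultimately show "actH_H \<Delta>H SH h x \<in> Qmap sH pair R ` V" using actH by (metis image_eqI)
    next
      fix b x assume "x \<in> Qmap sH pair R ` V"
      then obtain u where "u \<in> V" "x = Qmap sH pair R u" by blast
      moreover have "actA_A sH sA \<Delta>A pair R b u \<in> V" using V \<open>u \<in> V\<close> unfolding double_subrep_def by auto
      ultimately show "actA_H sH \<Delta>H pair b x \<in> Qmap sH pair R ` V" using actA by (metis image_eqI)
    qed
  qed
  show ?thesis using bb actH actA sub by blast
qed

end
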